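(* Let $F:\mathbb R^n\to\mathbb R^n$ be monotone with $\|F(z)-F(z')\|\le\ell\|z-z'\|$ and $\|\partial F(z)-\partial F(z')\|_\sigma\le\Lambda\|z-z'\|$. Let $\eta>0$, $z^{(-1)},z^{(0)}\in\mathbb R^n$, $z^{(t+1)}=z^{(t)}-2\eta F(z^{(t)})+\eta F(z^{(t-1)})$, $w^{(t)}:=z^{(t)}+\eta F(z^{(t-1)})$, $A^{(t)}:=\int_0^1\partial F(w^{(t)}-(1-\alpha)\eta F(z^{(t)}))d\alpha$, $B^{(t)}:=\int_0^1\partial F(w^{(t)}-(1-\alpha)\eta F(z^{(t-1)}))d\alpha$. Fix an integer $T\ge1$, set $C^{(T)}:=0$ and recursively $C^{(t-1)}:=(I-\eta A^{(t)}+C^{(t)})^{-1}\eta(\eta A^{(t)}-C^{(t)})B^{(t)}$ for $t=T,\dots,0$, and define $$D^{(t)}:=-\eta C^{(t)}B^{(t)}+(I-\eta A^{(t)}+C^{(t)})^{-1}(\eta A^{(t)}-C^{(t)})^2\eta B^{(t)}.$$ Suppose there is $L_0>0$ such that for all $0\le t\le T$, $\max\{\eta\|A^{(t)}\|_\sigma,\eta\|B^{(t)}\|_\sigma\}\le L_0\le\sqrt{1/200}$, and $\eta\ell\le 2/3$. Then for each $t\in\{1,\dots,T\}$, $$D^{(t)}+(D^{(t)})^\top\preceq 6L_0\eta^2(B^{(t)})^\top B^{(t)}+4L_0\eta^2A^{(t)}(A^{(t)})^\top+\Big(4L_0+\frac1{3L_0}\Big)C^{(t)}(C^{(t)})^\top$$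 and $$(D^{(t)})^\top D^{(t)}\preceq 60L_0^4\eta^2(B^{(t)})^\top B^{(t)}.$$
   Context: $F$ monotone means $\langle F(z')-F(z),z'-z\rangle\ge0$ for all $z,z'$. $\partial F$ is the Jacobian; $\|\cdot\|_\sigma$ the spectral norm; $S\preceq T$ means $T-S$ is positive semidefinite. (Under these hypotheses the inverses in the definitions exist.) *)

theory Defs
  imports "HOL-Analysis.Analysis"
begin

definition jac :: "(real^'n \<Rightarrow> real^'n) \<Rightarrow> real^'n \<Rightarrow> real^'n^'n" where
  "jac F z = matrix (frechet_derivative F (at z))"

(* spectral norm = operator norm w.r.t. the Euclidean norm *)
definition specnorm :: "real^'n^'m \<Rightarrow> real" where
  "specnorm M = onorm (\<lambda>x. M *v x)"

definition psd_le :: "real^'n^'n \<Rightarrow> real^'n^'n \<Rightarrow> bool" where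
  "psd_le S T \<longleftrightarrow> (\<forall>x. 0 \<le> x \<bullet> ((T - S) *v x))"

definition monotone_op :: "(real^'n \<Rightarrow> real^'n) \<Rightarrow> bool" where
  "monotone_op F \<longleftrightarrow> (\<forall>z z'. 0 \<le> (F z' - F z) \<bullet> (z' - z))"

definition wseq :: "(real^'n \<Rightarrow> real^'n) \<Rightarrow> real \<Rightarrow> (int \<Rightarrow> real^'n) \<Rightarrow> int \<Rightarrow> real^'n" where
  "wseq F \<eta> z t = z t + \<eta> *\<^sub>R F (z (t - 1))"

definition Amat :: "(real^'n \<Rightarrow> real^'n) \<Rightarrow> real \<Rightarrow> (int \<Rightarrow> real^'n) \<Rightarrow> int \<Rightarrow> real^'n^'n" where
  "Amat F \<eta> z t = integral {0..1}
     (\<lambda>\<alpha>::real. jac F (wseq F \<eta> z t - (1 - \<alpha>) *\<^sub>R (\<eta> *\<^sub>R F (z t))))"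

definition Bmat :: "(real^'n \<Rightarrow> real^'n) \<Rightarrow> real \<Rightarrow> (int \<Rightarrow> real^'n) \<Rightarrow> int \<Rightarrow> real^'n^'n" where
  "Bmat F \<eta> z t = integral {0..1}
     (\<lambda>\<alpha>::real. jac F (wseq F \<eta> z t - (1 - \<alpha>) *\<^sub>R (\<eta> *\<^sub>R F (z (t - 1)))))"

definition Dmat :: "real \<Rightarrow> real^'n^'n \<Rightarrow> real^'n^'n \<Rightarrow> real^'n^'n \<Rightarrow> real^'n^'n" where
  "Dmat \<eta> A B C =
     - (\<eta> *\<^sub>R (C ** B))
     + matrix_inv (mat 1 - \<eta> *\<^sub>R A + C) ** ((\<eta> *\<^sub>R A - C) ** (\<eta> *\<^sub>R A - C)) ** (\<eta> *\<^sub>R B)"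

end

theory Submission
  imports Defs
begin

definition nb :: "real^'n^'n \<Rightarrow> real \<Rightarrow> bool" where
  "nb M c \<longleftrightarrow> (\<forall>v. norm (M *v v) \<le> c * norm v)"

lemma dot_tr: "(x::real^'m) \<bullet> (A *v y) = (transpose A *v x) \<bullet> y"
  by (simp add: dot_lmul_matrix)

lemma neg_mv: "(- P) *v (v::real^'n) = - (P *v v)"
  by (simp add: matrix_vector_mult_def vec_eq_iff sum_negf)

lemma psd_iff: "psd_le S T \<longleftrightarrow> (\<forall>v. v \<bullet> (S *v v) \<le> v \<bullet> (T *v v))"
  by (simp add: psd_le_def matrix_vector_mult_diff_rdistrib inner_diff_right)

lemma specnorm_nb:
  fixes A :: "real^'n^'n"
  assumes "\<eta> > 0" "\<eta> * specnorm A \<le> L"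
  shows "nb (\<eta> *\<^sub>R A) L"
  unfolding nb_def
proof
  fix v
  have "norm ((\<eta> *\<^sub>R A) *v v) = \<eta> * norm (A *v v)"
    using assms by (simp add: scaleR_matrix_vector_assoc[symmetric])
  also have "\<dots> \<le> \<eta> * (specnorm A * norm v)"
    using assms onorm[OF matrix_vector_mul_bounded_linear, of A v]
    by (simp add: specnorm_def)
  also have "\<dots> \<le> L * norm v"
    using assms by (metis mult.assoc mult_right_mono norm_ge_zero)
  finally show "norm ((\<eta> *\<^sub>R A) *v v) \<le> L * norm v" .
qed

lemma inv_lemma:
  fixes X :: "real^'n^'n"
  assumes X: "nb X x" and x1: "x < 1" and x0: "0 \<le> x"
  shows "invertible (mat 1 - X)"
    and "\<forall>y. norm (matrix_inv (mat 1 - X) *v y) \<le> norm y / (1 - x)"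
    and "\<forall>y. matrix_inv (mat 1 - X) *v (X *v y) = X *v (matrix_inv (mat 1 - X) *v y)"
proof -
  let ?M = "mat 1 - X"
  have Mv: "?M *v u = u - X *v u" for u
    by (simp add: matrix_vector_mult_diff_rdistrib)
  have "inj ((*v) ?M)"
  proof (rule injI)
    fix u w assume "?M *v u = ?M *v w"
    then have "?M *v (u - w) = 0" by (simp add: matrix_vector_mult_diff_distrib)
    then have e: "u - w = X *v (u - w)" using Mv[of "u - w"] by simp
    have "norm (u - w) \<le> x * norm (u - w)" using X e unfolding nb_def by metis
    then have "(1 - x) * norm (u - w) \<le> 0" by (simp add: algebra_simps)
    then have "norm (u - w) \<le> 0" using x1 by (simp add: mult_le_0_iff)
    then have "norm (u - w) = 0" by simp
    then show "u = w" by simp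
  qed
  then show inv: "invertible ?M"
    using matrix_left_invertible_injective invertible_left_inverse by blast
  let ?N = "matrix_inv ?M"
  have "?M ** ?N = mat 1 \<and> ?N ** ?M = mat 1"
    using inv unfolding invertible_def matrix_inv_def by (rule someI_ex)
  then have MN: "?M *v (?N *v y) = y" and NM: "?N *v (?M *v y) = y" for y
    by (metis matrix_vector_mul_assoc matrix_vector_mul_lid)+
  show "\<forall>y. norm (?N *v y) \<le> norm y / (1 - x)"
  proof
    fix y
    let ?u = "?N *v y"
    have "?u = y + X *v ?u" using MN[of y] Mv[of ?u] by (simp add: algebra_simps)
    then have "norm ?u \<le> norm y + norm (X *v ?u)" by (metis norm_triangle_ineq)
    also have "\<dots> \<le> norm y + x * norm ?u" using X unfolding nb_def by simp
    finally have "(1 - x) * norm ?u \<le> norm y" by (simp add: algebra_simps)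
    then show "norm ?u \<le> norm y / (1 - x)" using x1 by (simp add: field_simps)
  qed
  show "\<forall>y. ?N *v (X *v y) = X *v (?N *v y)"
  proof
    fix y
    have "X *v y = y - ?M *v y" using Mv[of y] by simp
    then have 1: "?N *v (X *v y) = ?N *v y - y" using NM[of y]
      by (simp add: matrix_vector_mult_diff_distrib)
    have "X *v (?N *v y) = ?N *v y - ?M *v (?N *v y)" using Mv[of "?N *v y"] by simp
    then show "?N *v (X *v y) = X *v (?N *v y)" using 1 MN[of y] by simp
  qed
qed

lemma lin3: "(v::real^'n) \<bullet> ((a *\<^sub>R P + b *\<^sub>R Q + c *\<^sub>R R) *v v) = a * (v \<bullet> (P *v v)) + b * (v \<bullet> (Q *v v)) + c * (v \<bullet> (R *v v))"
  by (simp only: matrix_vector_mult_add_rdistrib inner_add_right scaleR_matrix_vector_assoc[symmetric] inner_scaleR_right)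

lemma lin1: "(v::real^'n) \<bullet> ((a *\<^sub>R P) *v v) = a * (v \<bullet> (P *v v))"
  by (simp only: scaleR_matrix_vector_assoc[symmetric] inner_scaleR_right)

lemma scal_ineq:
  fixes a b c L :: real
  assumes "0 < L" "0 \<le> a" "0 \<le> b" "0 \<le> c"
  shows "2 * (c * b + (3/2) * L * (a + c) * b) \<le> 6 * L * b^2 + 4 * L * a^2 + (4 * L + 1 / (3 * L)) * c^2"
proof -
  have "0 \<le> (3 * L * b - c)^2" by simp
  then have "2 * c * b * (3 * L) \<le> 9 * L^2 * b^2 + c^2" by (simp add: power2_eq_square algebra_simps)
  then have h1: "2 * c * b \<le> 3 * L * b^2 + c^2 / (3 * L)" using assms(1)
    by (simp add: field_simps power2_eq_square)
  have h2: "2 * a * b \<le> a^2 + b^2" using sum_squares_ge_zero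
    by (smt (verit) power2_diff zero_le_power2)
  have h3: "2 * c * b \<le> c^2 + b^2"
    by (smt (verit) power2_diff zero_le_power2)
  have "2 * (c * b + (3/2) * L * (a + c) * b) = 2*c*b + (3/2) * L * (2*a*b) + (3/2)*L*(2*c*b)"
    by (simp add: algebra_simps)
  also have "\<dots> \<le> (3 * L * b^2 + c^2 / (3 * L)) + (3/2) * L * (a^2 + b^2) + (3/2)*L*(c^2+b^2)"
    using h1 h2 h3 assms by (intro add_mono mult_left_mono) auto
  also have "\<dots> \<le> 6 * L * b^2 + 4 * L * a^2 + (4 * L + 1 / (3 * L)) * c^2"
  proof -
    have "6 * L * b^2 + 4 * L * a^2 + (4 * L + 1 / (3 * L)) * c^2 =
      (3 * L * b^2 + c^2 / (3 * L)) + (3/2) * L * (a^2 + b^2) + (3/2)*L*(c^2+b^2) + 5/2*L*a^2 + 5/2*L*c^2"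
      using assms by (simp add: field_simps)
    moreover have "0 \<le> 5/2*L*a^2" "0 \<le> 5/2*L*c^2" using assms by simp_all
    ultimately show ?thesis by linarith
  qed
  finally show ?thesis .
qed

lemma core:
  fixes A B C :: "real^'n^'n"
  assumes L0: "0 < L" and L1: "L \<le> 1/10" and eta: "0 < \<eta>"
    and nA: "nb (\<eta> *\<^sub>R A) L" and nB: "nb (\<eta> *\<^sub>R B) L" and nC: "nb C (2 * L^2)"
  shows "nb (matrix_inv (mat 1 - \<eta> *\<^sub>R A + C) ** (\<eta> *\<^sub>R ((\<eta> *\<^sub>R A - C) ** B))) (2 * L^2)"
    and "psd_le (Dmat \<eta> A B C + transpose (Dmat \<eta> A B C))
          ((6 * L * \<eta>\<^sup>2) *\<^sub>R (transpose B ** B)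
           + (4 * L * \<eta>\<^sup>2) *\<^sub>R (A ** transpose A)
           + (4 * L + 1 / (3 * L)) *\<^sub>R (C ** transpose C))"
    and "psd_le (transpose (Dmat \<eta> A B C) ** Dmat \<eta> A B C) ((60 * L ^ 4 * \<eta>\<^sup>2) *\<^sub>R (transpose B ** B))"
proof -
  define X where "X = \<eta> *\<^sub>R A - C"
  define x where "x = L + 2 * L^2"
  define N where "N = matrix_inv (mat 1 - X)"
  have M: "mat 1 - \<eta> *\<^sub>R A + C = mat 1 - X" unfolding X_def by (simp add: algebra_simps)
  have x12: "x \<le> 12/10 * L" using L0 L1 unfolding x_def by (simp add: power2_eq_square)
  have x0: "0 \<le> x" using L0 unfolding x_def by simp
  have x1: "x < 1" using x12 L1 by simp
  have nX: "nb X x" unfolding nb_def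
  proof
    fix v
    have "norm (X *v v) \<le> norm ((\<eta> *\<^sub>R A) *v v) + norm (C *v v)"
      unfolding X_def by (simp add: matrix_vector_mult_diff_rdistrib norm_triangle_ineq4)
    also have "\<dots> \<le> L * norm v + 2 * L^2 * norm v" using nA nC unfolding nb_def by (meson add_mono)
    finally show "norm (X *v v) \<le> x * norm v" unfolding x_def by (simp add: algebra_simps)
  qed
  note inv = inv_lemma[OF nX x1 x0, folded N_def]
  have NX: "norm (N *v (X *v y)) \<le> (3/2) * L * norm y" for y
  proof -
    have "norm (N *v (X *v y)) \<le> norm (X *v y) / (1 - x)" using inv(2) by blast
    also have "\<dots> \<le> x * norm y / (1 - x)" using nX x1 unfolding nb_def
      by (simp add: divide_right_mono)
    also have "\<dots> \<le> (3/2) * L * norm y"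
    proof -
      have "x * norm y \<le> (3/2) * L * norm y * (1 - x)"
      proof -
        have "x + (3/2) * L * x \<le> 12/10 * L + (3/2) * L * (12/100)"
          using x12 L0 L1 x1 x0 by (intro add_mono mult_left_mono) auto
        also have "\<dots> \<le> (3/2) * L" using L0 by simp
        finally have "x \<le> (3/2) * L * (1 - x)" by (simp add: algebra_simps)
        then show ?thesis by (metis mult.commute mult.left_commute mult_right_mono norm_ge_zero)
      qed
      then show ?thesis using x1 by (simp add: field_simps)
    qed
    finally show ?thesis .
  qed
  have bv: "norm ((\<eta> *\<^sub>R B) *v v) \<le> L * norm v" for v using nB unfolding nb_def by blast
  show "nb (matrix_inv (mat 1 - \<eta> *\<^sub>R A + C) ** (\<eta> *\<^sub>R ((\<eta> *\<^sub>R A - C) ** B))) (2 * L^2)"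
    unfolding nb_def
  proof
    fix v
    have e: "(matrix_inv (mat 1 - \<eta> *\<^sub>R A + C) ** (\<eta> *\<^sub>R ((\<eta> *\<^sub>R A - C) ** B))) *v v
       = N *v (X *v ((\<eta> *\<^sub>R B) *v v))"
      unfolding M N_def X_def
      by (simp add: matrix_vector_mul_assoc[symmetric] scaleR_matrix_vector_assoc[symmetric]
          matrix_vector_mult_scaleR)
    have "norm (N *v (X *v ((\<eta> *\<^sub>R B) *v v))) \<le> (3/2) * L * (L * norm v)"
    proof -
      have "3/2*L*norm ((\<eta> *\<^sub>R B) *v v) \<le> 3/2*L*(L*norm v)" using bv[of v] L0 by (intro mult_left_mono) auto
      then show ?thesis using NX[of "(\<eta> *\<^sub>R B) *v v"] by linarith
    qed
    also have "\<dots> \<le> 2 * L^2 * norm v" using L0 by (simp add: power2_eq_square mult_right_mono)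
    finally show "norm ((matrix_inv (mat 1 - \<eta> *\<^sub>R A + C) ** (\<eta> *\<^sub>R ((\<eta> *\<^sub>R A - C) ** B))) *v v) \<le> 2 * L^2 * norm v"
      using e by simp
  qed

  define D where "D = Dmat \<eta> A B C"
  have Dv: "D *v v = -(C *v ((\<eta> *\<^sub>R B) *v v)) + X *v (N *v (X *v ((\<eta> *\<^sub>R B) *v v)))" for v
  proof -
    have "D *v v = -((\<eta> *\<^sub>R (C ** B)) *v v) + N *v (X *v (X *v ((\<eta> *\<^sub>R B) *v v)))"
      unfolding D_def Dmat_def M X_def[symmetric] N_def[symmetric]
      by (simp add: matrix_vector_mult_add_rdistrib matrix_vector_mult_diff_rdistrib neg_mv matrix_vector_mul_assoc[symmetric])
    also have "(\<eta> *\<^sub>R (C ** B)) *v v = C *v ((\<eta> *\<^sub>R B) *v v)"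
      by (simp add: matrix_vector_mul_assoc[symmetric] scaleR_matrix_vector_assoc[symmetric]
          matrix_vector_mult_scaleR)
    also have "N *v (X *v (X *v ((\<eta> *\<^sub>R B) *v v))) = X *v (N *v (X *v ((\<eta> *\<^sub>R B) *v v)))"
      using inv(3) by blast
    finally show ?thesis .
  qed
  have DT: "v \<bullet> (transpose D *v v) = v \<bullet> (D *v v)" for v
    using dot_tr[of v "transpose D" v] by (simp add: inner_commute)
  have quad: "v \<bullet> ((transpose P ** P) *v v) = norm (P *v v)^2" for P :: "real^'n^'n" and v
    using dot_tr[of v "transpose P" "P *v v"]
    by (simp add: matrix_vector_mul_assoc[symmetric] power2_norm_eq_inner)
  have quad2: "v \<bullet> ((P ** transpose P) *v v) = norm (transpose P *v v)^2" for P :: "real^'n^'n" and v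
    using quad[where P="transpose P"] by simp
  have bnorm: "\<eta>\<^sup>2 * norm (B *v v)^2 = norm ((\<eta> *\<^sub>R B) *v v)^2" for v
    using eta by (simp add: scaleR_matrix_vector_assoc[symmetric] power_mult_distrib)
  have anorm: "\<eta>\<^sup>2 * norm (transpose A *v v)^2 = norm (transpose (\<eta> *\<^sub>R A) *v v)^2" for v
    using eta by (simp add: transpose_scalar scaleR_matrix_vector_assoc[symmetric] power_mult_distrib)
  show "psd_le (Dmat \<eta> A B C + transpose (Dmat \<eta> A B C))
          ((6 * L * \<eta>\<^sup>2) *\<^sub>R (transpose B ** B)
           + (4 * L * \<eta>\<^sup>2) *\<^sub>R (A ** transpose A)
           + (4 * L + 1 / (3 * L)) *\<^sub>R (C ** transpose C))"
    unfolding psd_iff D_def[symmetric]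
  proof
    fix v
    define bV where "bV = (\<eta> *\<^sub>R B) *v v"
    define aV where "aV = transpose (\<eta> *\<^sub>R A) *v v"
    define cV where "cV = transpose C *v v"
    define w where "w = N *v (X *v bV)"
    have wb: "norm w \<le> (3/2) * L * norm bV" unfolding w_def by (rule NX)
    have "v \<bullet> (D *v v) = - (cV \<bullet> bV) + (aV - cV) \<bullet> w"
      unfolding Dv bV_def[symmetric] w_def[symmetric] X_def aV_def cV_def
      by (simp add: inner_add_right inner_minus_right matrix_vector_mult_diff_rdistrib inner_diff_right
           dot_tr[of v C] dot_tr[of v "\<eta> *\<^sub>R A"] inner_diff_left w_def X_def)
    also have "\<dots> \<le> norm cV * norm bV + norm (aV - cV) * norm w"
      by (smt (verit) Cauchy_Schwarz_ineq2 abs_le_D1 inner_minus_left norm_cauchy_schwarz)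
    also have "\<dots> \<le> norm cV * norm bV + (norm aV + norm cV) * ((3/2) * L * norm bV)"
      by (intro add_mono mult_mono wb norm_triangle_ineq4) auto
    finally have le1: "v \<bullet> (D *v v) \<le> norm cV * norm bV + (3/2) * L * (norm aV + norm cV) * norm bV"
      by (simp add: algebra_simps)
    have "v \<bullet> ((D + transpose D) *v v) = 2 * (v \<bullet> (D *v v))"
      by (simp add: matrix_vector_mult_add_rdistrib inner_add_right DT[simplified])
    also have "\<dots> \<le> 6 * L * norm bV^2 + 4 * L * norm aV^2 + (4 * L + 1 / (3 * L)) * norm cV^2"
      using scal_ineq[where a="norm aV" and b="norm bV" and c="norm cV", OF L0 norm_ge_zero norm_ge_zero norm_ge_zero]
        mult_left_mono[OF le1, of 2] by (meson order_trans zero_le_numeral)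
    also have "\<dots> = v \<bullet> (((6 * L * \<eta>\<^sup>2) *\<^sub>R (transpose B ** B)
           + (4 * L * \<eta>\<^sup>2) *\<^sub>R (A ** transpose A)
           + (4 * L + 1 / (3 * L)) *\<^sub>R (C ** transpose C)) *v v)"
    proof -
      have e1: "norm bV^2 = \<eta>\<^sup>2 * (v \<bullet> ((transpose B ** B) *v v))"
        unfolding bV_def quad bnorm[symmetric] ..
      have e2: "norm aV^2 = \<eta>\<^sup>2 * (v \<bullet> ((A ** transpose A) *v v))"
        unfolding aV_def quad2 anorm[symmetric] ..
      have e3: "norm cV^2 = v \<bullet> ((C ** transpose C) *v v)"
        unfolding cV_def quad2 ..
      show ?thesis unfolding lin3 e1 e2 e3 by (simp add: algebra_simps)
    qed
    finally show "v \<bullet> ((D + transpose D) *v v) \<le> v \<bullet> (((6 * L * \<eta>\<^sup>2) *\<^sub>R (transpose B ** B)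
           + (4 * L * \<eta>\<^sup>2) *\<^sub>R (A ** transpose A)
           + (4 * L + 1 / (3 * L)) *\<^sub>R (C ** transpose C)) *v v)" .
  qed
  show "psd_le (transpose (Dmat \<eta> A B C) ** Dmat \<eta> A B C) ((60 * L ^ 4 * \<eta>\<^sup>2) *\<^sub>R (transpose B ** B))"
    unfolding psd_iff D_def[symmetric]
  proof
    fix v
    define bV where "bV = (\<eta> *\<^sub>R B) *v v"
    have "norm (D *v v) \<le> norm (C *v bV) + norm (X *v (N *v (X *v bV)))"
      unfolding Dv bV_def[symmetric] by (metis norm_minus_cancel norm_triangle_ineq)
    also have "\<dots> \<le> 2 * L^2 * norm bV + x * ((3/2) * L * norm bV)"
    proof (rule add_mono)
      show "norm (C *v bV) \<le> 2 * L^2 * norm bV" using nC unfolding nb_def by blast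
      have "norm (X *v (N *v (X *v bV))) \<le> x * norm (N *v (X *v bV))" using nX unfolding nb_def by blast
      also have "\<dots> \<le> x * ((3/2) * L * norm bV)" using NX x0 by (intro mult_left_mono) auto
      finally show "norm (X *v (N *v (X *v bV))) \<le> x * ((3/2) * L * norm bV)" .
    qed
    also have "\<dots> \<le> 4 * L^2 * norm bV"
    proof -
      have "x * (3/2 * L) \<le> (12/10 * L) * (3/2 * L)" using x12 L0 by (intro mult_right_mono) auto
      moreover have "(12/10 * L) * (3/2 * L) = 18/10 * L^2" by (simp add: power2_eq_square)
      moreover have "0 \<le> L^2" by simp
      ultimately have "x * (3/2 * L) \<le> 2 * L^2" by linarith
      then have "x * (3/2 * L) * norm bV \<le> 2 * L^2 * norm bV" by (rule mult_right_mono) simp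
      then show ?thesis by (simp add: algebra_simps)
    qed
    finally have nD: "norm (D *v v) \<le> 4 * L^2 * norm bV" .
    have "v \<bullet> ((transpose D ** D) *v v) = norm (D *v v)^2" by (rule quad)
    also have "\<dots> \<le> (4 * L^2 * norm bV)^2" using nD by (simp add: power_mono)
    also have "\<dots> \<le> 60 * L^4 * norm bV^2" by (simp add: power_mult_distrib)
    also have "\<dots> = v \<bullet> ((60 * L ^ 4 * \<eta>\<^sup>2) *\<^sub>R ((transpose B ** B)) *v v)"
      unfolding lin1 bV_def quad bnorm[symmetric] by (simp add: algebra_simps)
    finally show "v \<bullet> ((transpose D ** D) *v v) \<le> v \<bullet> ((60 * L ^ 4 * \<eta>\<^sup>2) *\<^sub>R ((transpose B ** B)) *v v)" .
  qed
qed
theorem lemma16: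
  fixes F :: "real^'n \<Rightarrow> real^'n"
    and ell Lam \<eta> L0 :: real
    and z :: "int \<Rightarrow> real^'n"
    and C :: "int \<Rightarrow> real^'n^'n"
    and T :: int
  assumes mono: "monotone_op F"
    and diff: "\<And>x. F differentiable (at x)"
    and lipF: "\<And>x y. norm (F x - F y) \<le> ell * norm (x - y)"
    and lipJ: "\<And>x y. specnorm (jac F x - jac F y) \<le> Lam * norm (x - y)"
    and eta_pos: "\<eta> > 0"
    and iter: "\<And>t. t \<ge> 0 \<Longrightarrow>
        z (t + 1) = z t - (2 * \<eta>) *\<^sub>R F (z t) + \<eta> *\<^sub>R F (z (t - 1))"
    and T1: "T \<ge> 1"
    and CT: "C T = 0"
    and Crec: "\<And>t. 0 \<le> t \<Longrightarrow> t \<le> T \<Longrightarrow>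
        C (t - 1) = matrix_inv (mat 1 - \<eta> *\<^sub>R Amat F \<eta> z t + C t)
                    ** (\<eta> *\<^sub>R ((\<eta> *\<^sub>R Amat F \<eta> z t - C t) ** Bmat F \<eta> z t))"
    and L0_pos: "L0 > 0"
    and bndA: "\<And>t. 0 \<le> t \<Longrightarrow> t \<le> T \<Longrightarrow> \<eta> * specnorm (Amat F \<eta> z t) \<le> L0"
    and bndB: "\<And>t. 0 \<le> t \<Longrightarrow> t \<le> T \<Longrightarrow> \<eta> * specnorm (Bmat F \<eta> z t) \<le> L0"
    and L0_small: "L0 \<le> sqrt (1 / 200)"
    and eta_ell: "\<eta> * ell \<le> 2 / 3"
  shows "\<forall>t. 1 \<le> t \<and> t \<le> T \<longrightarrow>
      (let A = Amat F \<eta> z t; B = Bmat F \<eta> z t; D = Dmat \<eta> A B (C t) in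
        psd_le (D + transpose D)
          ((6 * L0 * \<eta>\<^sup>2) *\<^sub>R (transpose B ** B)
           + (4 * L0 * \<eta>\<^sup>2) *\<^sub>R (A ** transpose A)
           + (4 * L0 + 1 / (3 * L0)) *\<^sub>R (C t ** transpose (C t)))
        \<and> psd_le (transpose D ** D) ((60 * L0 ^ 4 * \<eta>\<^sup>2) *\<^sub>R (transpose B ** B)))"
proof -
  have s: "sqrt (1/200) \<le> sqrt ((1/10)^2)" by (subst real_sqrt_le_iff) (simp add: power2_eq_square)
  have L1: "L0 \<le> 1/10" using L0_small s by simp
  have nbA: "nb (\<eta> *\<^sub>R Amat F \<eta> z t) L0" if "0 \<le> t" "t \<le> T" for t
    using specnorm_nb[OF eta_pos bndA[OF that]] .
  have nbB: "nb (\<eta> *\<^sub>R Bmat F \<eta> z t) L0" if "0 \<le> t" "t \<le> T" for t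
    using specnorm_nb[OF eta_pos bndB[OF that]] .
  have Cb: "0 \<le> T - int k \<longrightarrow> nb (C (T - int k)) (2*L0^2)" for k
  proof (induction k)
    case 0
    show ?case using CT by (simp add: nb_def)
  next
    case (Suc k)
    show ?case
    proof
      assume h: "0 \<le> T - int (Suc k)"
      define t where "t = T - int k"
      have t1: "0 \<le> t" "t \<le> T" using h unfolding t_def by auto
      have IH: "nb (C t) (2*L0^2)" using Suc h unfolding t_def by simp
      have e: "T - int (Suc k) = t - 1" unfolding t_def by simp
      show "nb (C (T - int (Suc k))) (2*L0^2)"
        unfolding e Crec[OF t1]
        by (rule core(1)[OF L0_pos L1 eta_pos nbA[OF t1] nbB[OF t1] IH])
    qed
  qed
  show ?thesis
  proof (intro allI impI)
    fix t assume t: "1 \<le> t \<and> t \<le> T"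
    then have t1: "0 \<le> t" "t \<le> T" by auto
    have "T - int (nat (T - t)) = t" using t by simp
    then have nC: "nb (C t) (2*L0^2)" using Cb[of "nat (T - t)"] t by simp
    note c = core[OF L0_pos L1 eta_pos nbA[OF t1] nbB[OF t1] nC]
    show "let A = Amat F \<eta> z t; B = Bmat F \<eta> z t; D = Dmat \<eta> A B (C t) in
        psd_le (D + transpose D)
          ((6 * L0 * \<eta>\<^sup>2) *\<^sub>R (transpose B ** B)
           + (4 * L0 * \<eta>\<^sup>2) *\<^sub>R (A ** transpose A)
           + (4 * L0 + 1 / (3 * L0)) *\<^sub>R (C t ** transpose (C t)))
        \<and> psd_le (transpose D ** D) ((60 * L0 ^ 4 * \<eta>\<^sup>2) *\<^sub>R (transpose B ** B))"
      unfolding Let_def using c(2) c(3) by blast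
  qed
qed

end
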